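(* Let $\mathcal G$ be a doubly connected molecular graph. Construct $\mathcal G_{new}$ from $\mathcal G$ as follows: add a new molecule $\mathcal M_{new}$; add a diffusive edge $b_1$ joining $\mathcal M_{new}$ and a molecule $\mathcal M_1$ of $\mathcal G$, and a blue solid edge $b_2$ joining $\mathcal M_{new}$ and a molecule $\mathcal M_2$ of $\mathcal G$; and replace a blue solid edge $b$ of $\mathcal G$ joining molecules $\mathcal M_3$ and $\mathcal M_4$ by two blue solid edges, $b_3$ joining $\mathcal M_3$ and $\mathcal M_{new}$ and $b_4$ joining $\mathcal M_4$ and $\mathcal M_{new}$. Then the blue solid edge $b_2$ is redundant in $\mathcal G_{new}$.
   Context: A molecular graph is a finite multigraph whose vertices are called molecules and each of whose edges joins two distinct molecules and is either a diffusive edge or a blue solid edge (parallel edges are allowed). A molecular graph is doubly connected if there exist two disjoint sets of edges, $\mathcal B_{black}$ consisting only of diffusive edges and $\mathcal B_{blue}$ consisting only of blue solid or diffusive edges, such that each of $\mathcal B_{black}$ and $\mathcal B_{blue}$ contains a spanning tree of the set of all molecules. A blue solid edge $e$ of a doubly connected graph is redundant if the graph obtained by deleting $e$ is still doubly connected. *)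

theory Defs
  imports Main
begin

text \<open>Molecular graphs as finite multigraphs: a set V of molecules, a set E of edge
  identifiers, an endpoint map (unordered: both orientations are treated alike) and
  a kind map.\<close>

datatype edge_kind = Diffusive | BlueSolid

definition molecular_graph ::
  "'v set \<Rightarrow> 'e set \<Rightarrow> ('e \<Rightarrow> 'v \<times> 'v) \<Rightarrow> bool" where
  "molecular_graph V E ends \<longleftrightarrow> finite V \<and> finite E \<and>
     (\<forall>e\<in>E. fst (ends e) \<in> V \<and> snd (ends e) \<in> V \<and> fst (ends e) \<noteq> snd (ends e))"

definition edge_rel :: "('e \<Rightarrow> 'v \<times> 'v) \<Rightarrow> 'e set \<Rightarrow> ('v \<times> 'v) set" where
  "edge_rel ends T = {(x, y). \<exists>e\<in>T. ends e = (x, y) \<or> ends e = (y, x)}"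

definition connects :: "'v set \<Rightarrow> ('e \<Rightarrow> 'v \<times> 'v) \<Rightarrow> 'e set \<Rightarrow> bool" where
  "connects V ends T \<longleftrightarrow> (\<forall>u\<in>V. \<forall>w\<in>V. (u, w) \<in> (edge_rel ends T)\<^sup>*)"

definition spanning_tree :: "'v set \<Rightarrow> ('e \<Rightarrow> 'v \<times> 'v) \<Rightarrow> 'e set \<Rightarrow> bool" where
  "spanning_tree V ends T \<longleftrightarrow> connects V ends T \<and> (\<forall>e\<in>T. \<not> connects V ends (T - {e}))"

definition contains_spanning_tree :: "'v set \<Rightarrow> ('e \<Rightarrow> 'v \<times> 'v) \<Rightarrow> 'e set \<Rightarrow> bool" where
  "contains_spanning_tree V ends B \<longleftrightarrow> (\<exists>T. T \<subseteq> B \<and> spanning_tree V ends T)"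

definition doubly_connected ::
  "'v set \<Rightarrow> 'e set \<Rightarrow> ('e \<Rightarrow> 'v \<times> 'v) \<Rightarrow> ('e \<Rightarrow> edge_kind) \<Rightarrow> bool" where
  "doubly_connected V E ends kind \<longleftrightarrow>
     (\<exists>Bblack Bblue. Bblack \<subseteq> E \<and> Bblue \<subseteq> E \<and> Bblack \<inter> Bblue = {} \<and>
        (\<forall>e\<in>Bblack. kind e = Diffusive) \<and>
        (\<forall>e\<in>Bblue. kind e = BlueSolid \<or> kind e = Diffusive) \<and>
        contains_spanning_tree V ends Bblack \<and> contains_spanning_tree V ends Bblue)"

definition redundant ::
  "'v set \<Rightarrow> 'e set \<Rightarrow> ('e \<Rightarrow> 'v \<times> 'v) \<Rightarrow> ('e \<Rightarrow> edge_kind) \<Rightarrow> 'e \<Rightarrow> bool" where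
  "redundant V E ends kind e \<longleftrightarrow>
     e \<in> E \<and> kind e = BlueSolid \<and> doubly_connected V E ends kind \<and>
     doubly_connected V (E - {e}) ends kind"

end

theory Submission
  imports Defs
begin

lemma extract_tree:
  assumes "finite B" "connects V ends B"
  shows "contains_spanning_tree V ends B"
  using assms
proof (induction B rule: finite_psubset_induct)
  case (psubset A)
  show ?case
  proof (cases "spanning_tree V ends A")
    case True then show ?thesis unfolding contains_spanning_tree_def by blast
  next
    case False
    then obtain e where e: "e \<in> A" "connects V ends (A - {e})"
      using psubset.prems unfolding spanning_tree_def by blast
    have "A - {e} \<subset> A" using e by blast
    from psubset.IH[OF this e(2)] show ?thesis
      unfolding contains_spanning_tree_def by blast
  qed
qed

lemma dc_mono:
  assumes "doubly_connected V E0 ends kind" "E0 \<subseteq> E1"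
  shows "doubly_connected V E1 ends kind"
proof -
  obtain Bk Bu where h: "Bk \<subseteq> E0" "Bu \<subseteq> E0" "Bk \<inter> Bu = {}"
    "\<forall>e\<in>Bk. kind e = Diffusive" "\<forall>e\<in>Bu. kind e = BlueSolid \<or> kind e = Diffusive"
    "contains_spanning_tree V ends Bk" "contains_spanning_tree V ends Bu"
    using assms(1) unfolding doubly_connected_def by blast
  have "Bk \<subseteq> E1" "Bu \<subseteq> E1" using h(1,2) assms(2) by auto
  then show ?thesis unfolding doubly_connected_def using h(3-7) by blast
qed

lemma connects_ext:
  assumes "connects V ends T"
    and "edge_rel ends T \<subseteq> (edge_rel ends' T')\<^sup>*"
    and "x \<in> V" "(Mnew, x) \<in> edge_rel ends' T'"
  shows "connects (insert Mnew V) ends' T'"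
proof -
  have sub: "(edge_rel ends T)\<^sup>* \<subseteq> (edge_rel ends' T')\<^sup>*"
    using assms(2) by (rule rtrancl_subset_rtrancl)
  have sym: "(x, Mnew) \<in> edge_rel ends' T'" using assms(4) unfolding edge_rel_def by auto
  have V: "\<forall>u\<in>V. \<forall>w\<in>V. (u, w) \<in> (edge_rel ends' T')\<^sup>*"
    using assms(1) sub unfolding connects_def by blast
  show ?thesis unfolding connects_def
  proof (intro ballI)
    fix u w assume u: "u \<in> insert Mnew V" and w: "w \<in> insert Mnew V"
    have a: "(u, x) \<in> (edge_rel ends' T')\<^sup>*"
    proof (cases "u = Mnew")
      case True then show ?thesis using assms(4) by (simp add: r_into_rtrancl)
    next
      case False then have "u \<in> V" using u by simp
      then show ?thesis using V assms(3) by blast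
    qed
    have c: "(x, w) \<in> (edge_rel ends' T')\<^sup>*"
    proof (cases "w = Mnew")
      case True then show ?thesis using sym by (simp add: r_into_rtrancl)
    next
      case False then have "w \<in> V" using w by simp
      then show ?thesis using V assms(3) by blast
    qed
    show "(u, w) \<in> (edge_rel ends' T')\<^sup>*" using a c by (rule rtrancl_trans)
  qed
qed

theorem claimA3:
  fixes V :: "'v set" and E :: "'e set"
    and ends :: "'e \<Rightarrow> 'v \<times> 'v" and kind :: "'e \<Rightarrow> edge_kind"
    and Mnew M1 M2 M3 M4 :: 'v and b b1 b2 b3 b4 :: 'e
  assumes "molecular_graph V E ends"
    and "doubly_connected V E ends kind"
    and "Mnew \<notin> V"
    and "M1 \<in> V" and "M2 \<in> V"
    and "b \<in> E" and "kind b = BlueSolid" and "ends b = (M3, M4)"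
    and "b1 \<notin> E" and "b2 \<notin> E" and "b3 \<notin> E" and "b4 \<notin> E"
    and "distinct [b1, b2, b3, b4]"
  shows "redundant (insert Mnew V) ({b1, b2, b3, b4} \<union> (E - {b}))
           (ends(b1 := (Mnew, M1), b2 := (Mnew, M2), b3 := (M3, Mnew), b4 := (M4, Mnew)))
           (kind(b1 := Diffusive, b2 := BlueSolid, b3 := BlueSolid, b4 := BlueSolid))
           b2"
proof -
  define ends' where "ends' = ends(b1 := (Mnew, M1), b2 := (Mnew, M2), b3 := (M3, Mnew), b4 := (M4, Mnew))"
  define kind' where "kind' = kind(b1 := Diffusive, b2 := BlueSolid, b3 := BlueSolid, b4 := BlueSolid)"
  define E' where "E' = {b1, b2, b3, b4} \<union> (E - {b})"
  have fin: "finite E" using assms(1) unfolding molecular_graph_def by simp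
  have "fst (ends b) \<in> V" using assms(1,6) unfolding molecular_graph_def by blast
  then have M3: "M3 \<in> V" using assms(8) by simp
  obtain Bk Bu where Bk: "Bk \<subseteq> E" and Bu: "Bu \<subseteq> E" and disj: "Bk \<inter> Bu = {}"
    and kk: "\<forall>e\<in>Bk. kind e = Diffusive"
    and ku: "\<forall>e\<in>Bu. kind e = BlueSolid \<or> kind e = Diffusive"
    and Tk: "contains_spanning_tree V ends Bk" and Tu: "contains_spanning_tree V ends Bu"
    using assms(2) unfolding doubly_connected_def by blast
  obtain T1 where T1: "T1 \<subseteq> Bk" "connects V ends T1"
    using Tk unfolding contains_spanning_tree_def spanning_tree_def by blast
  obtain T2 where T2: "T2 \<subseteq> Bu" "connects V ends T2"
    using Tu unfolding contains_spanning_tree_def spanning_tree_def by blast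
  have bk: "b \<notin> Bk" using kk assms(7) by auto
  have agree: "\<And>e. e \<in> E \<Longrightarrow> ends' e = ends e \<and> kind' e = kind e"
  proof -
    fix e assume "e \<in> E"
    then have "e \<noteq> b1" "e \<noteq> b2" "e \<noteq> b3" "e \<noteq> b4" using assms(9-12) by auto
    then show "ends' e = ends e \<and> kind' e = kind e" unfolding ends'_def kind'_def by simp
  qed
  define Bk' where "Bk' = insert b1 Bk"
  define Bu' where "Bu' = {b3, b4} \<union> (Bu - {b})"
  define T1' where "T1' = insert b1 T1"
  define T2' where "T2' = {b3, b4} \<union> (T2 - {b})"
  have "connects (insert Mnew V) ends' T1'"
  proof (rule connects_ext[OF T1(2) _ assms(4)])
    show "edge_rel ends T1 \<subseteq> (edge_rel ends' T1')\<^sup>*"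
    proof
      fix p assume "p \<in> edge_rel ends T1"
      then obtain x y e where p: "p = (x, y)" and e: "e \<in> T1" "ends e = (x, y) \<or> ends e = (y, x)"
        unfolding edge_rel_def by blast
      have "ends' e = ends e" using agree e(1) T1(1) Bk by blast
      moreover have "e \<in> T1'" using e(1) unfolding T1'_def by blast
      ultimately have "p \<in> edge_rel ends' T1'" unfolding edge_rel_def p using e(2) by auto
      then show "p \<in> (edge_rel ends' T1')\<^sup>*" by blast
    qed
    show "(Mnew, M1) \<in> edge_rel ends' T1'"
      unfolding edge_rel_def T1'_def ends'_def using assms(13) by auto
  qed
  then have ck: "contains_spanning_tree (insert Mnew V) ends' Bk'"
  proof -
    have sub: "T1 \<subseteq> E" using Bk T1(1) by blast
    have "finite T1" using finite_subset[OF sub fin] .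
    then have "finite T1'" unfolding T1'_def by simp
    from extract_tree[OF this \<open>connects (insert Mnew V) ends' T1'\<close>]
    obtain T where T: "T \<subseteq> T1'" "spanning_tree (insert Mnew V) ends' T"
      unfolding contains_spanning_tree_def by blast
    have "T1' \<subseteq> Bk'" unfolding T1'_def Bk'_def using T1(1) by blast
    then show ?thesis unfolding contains_spanning_tree_def using T by blast
  qed
  have e3: "(M3, Mnew) \<in> edge_rel ends' T2'" "(Mnew, M3) \<in> edge_rel ends' T2'"
    "(M4, Mnew) \<in> edge_rel ends' T2'" "(Mnew, M4) \<in> edge_rel ends' T2'"
    unfolding edge_rel_def T2'_def ends'_def using assms(13) by auto
  have "connects (insert Mnew V) ends' T2'"
  proof (rule connects_ext[OF T2(2) _ M3 e3(2)])
    show "edge_rel ends T2 \<subseteq> (edge_rel ends' T2')\<^sup>*"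
    proof
      fix p assume "p \<in> edge_rel ends T2"
      then obtain x y e where p: "p = (x, y)" and e: "e \<in> T2" "ends e = (x, y) \<or> ends e = (y, x)"
        unfolding edge_rel_def by blast
      show "p \<in> (edge_rel ends' T2')\<^sup>*"
      proof (cases "e = b")
        case True
        have "(M3, M4) \<in> (edge_rel ends' T2')\<^sup>*" "(M4, M3) \<in> (edge_rel ends' T2')\<^sup>*"
          using rtrancl_trans[OF r_into_rtrancl[OF e3(1)] r_into_rtrancl[OF e3(4)]]
            rtrancl_trans[OF r_into_rtrancl[OF e3(3)] r_into_rtrancl[OF e3(2)]] by auto
        then show ?thesis using e True assms(8) p by auto
      next
        case False
        have "ends' e = ends e" using agree e(1) T2(1) Bu by blast
        moreover have "e \<in> T2'" using e(1) False unfolding T2'_def by blast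
        ultimately have "p \<in> edge_rel ends' T2'" unfolding edge_rel_def p using e(2) by auto
        then show ?thesis by blast
      qed
    qed
  qed
  then have cu: "contains_spanning_tree (insert Mnew V) ends' Bu'"
  proof -
    have sub: "T2 \<subseteq> E" using Bu T2(1) by blast
    have "finite T2" using finite_subset[OF sub fin] .
    then have "finite T2'" unfolding T2'_def by simp
    from extract_tree[OF this \<open>connects (insert Mnew V) ends' T2'\<close>]
    obtain T where T: "T \<subseteq> T2'" "spanning_tree (insert Mnew V) ends' T"
      unfolding contains_spanning_tree_def by blast
    have "T2' \<subseteq> Bu'" unfolding T2'_def Bu'_def using T2(1) by blast
    then show ?thesis unfolding contains_spanning_tree_def using T by blast
  qed
  have dc: "doubly_connected (insert Mnew V) (E' - {b2}) ends' kind'"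
    unfolding doubly_connected_def
  proof (intro exI conjI)
    show "Bk' \<subseteq> E' - {b2}" unfolding Bk'_def E'_def using Bk bk assms(10,13) by auto
    show "Bu' \<subseteq> E' - {b2}" unfolding Bu'_def E'_def using Bu assms(10,13) by auto
    show "Bk' \<inter> Bu' = {}" unfolding Bk'_def Bu'_def using disj Bk Bu assms(9,11,12,13) by auto
    have k1: "kind' b1 = Diffusive" "kind' b3 = BlueSolid" "kind' b4 = BlueSolid"
      unfolding kind'_def using assms(13) by auto
    show "\<forall>e\<in>Bk'. kind' e = Diffusive" unfolding Bk'_def
    proof
      fix e assume "e \<in> insert b1 Bk"
      then show "kind' e = Diffusive"
      proof
        assume "e \<in> Bk" then show ?thesis using kk agree Bk by (metis subsetD)
      qed (simp add: k1)
    qed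
    show "\<forall>e\<in>Bu'. kind' e = BlueSolid \<or> kind' e = Diffusive" unfolding Bu'_def
    proof
      fix e assume e: "e \<in> {b3, b4} \<union> (Bu - {b})"
      show "kind' e = BlueSolid \<or> kind' e = Diffusive"
      proof (cases "e \<in> Bu")
        case True then show ?thesis using ku agree Bu by (metis subsetD)
      next
        case False then show ?thesis using e k1 by auto
      qed
    qed
  qed (rule ck, rule cu)
  show ?thesis
    unfolding redundant_def ends'_def[symmetric] kind'_def[symmetric] E'_def[symmetric]
  proof (intro conjI)
    show "b2 \<in> E'" unfolding E'_def by simp
    show "kind' b2 = BlueSolid" unfolding kind'_def using assms(13) by auto
    show "doubly_connected (insert Mnew V) E' ends' kind'" by (rule dc_mono[OF dc]) blast
  qed (rule dc)
qed

end
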